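(* Let $d\in\mathbb Z_{>0}$ and $s\in\{-1,1\}$. Then there exist infinitely many positive integers $n$ of the special form such that $\Phi_n(T)\equiv 1+sT^d \pmod{T^{2d}}$ in $\mathbb Z[T]$.
   Context: $\Phi_n(T)\in\mathbb Z[T]$ denotes the $n$-th cyclotomic polynomial (the monic minimal polynomial over $\mathbb Q$ of a primitive $n$-th root of unity). A positive integer $n$ is of the special form if $n=pm$ where $p$ is a prime number and $m$ is a positive integer dividing $p-1$. *)

theory Defs
  imports Complex_Main "HOL-Computational_Algebra.Polynomial" "HOL-Computational_Algebra.Primes"
begin

text \<open>The n-th cyclotomic polynomial, defined as in the paper: the monic minimal polynomial
  over the rationals of a primitive n-th root of unity (here the root cis(2 pi / n)),
  which is asserted to have integer coefficients by taking it in int poly.\<close>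
definition cyclotomic_poly :: "nat \<Rightarrow> int poly" where
  "cyclotomic_poly n =
     (THE p :: int poly.
        lead_coeff p = 1 \<and>
        poly (map_poly of_int p) (cis (2 * pi / real n)) = (0::complex) \<and>
        (\<forall>q :: rat poly. q \<noteq> 0 \<and> poly (map_poly of_rat q) (cis (2 * pi / real n)) = (0::complex)
            \<longrightarrow> degree p \<le> degree q))"

definition special_form :: "nat \<Rightarrow> bool" where
  "special_form n \<longleftrightarrow> (\<exists>p m. prime p \<and> m > 0 \<and> m dvd (p - 1) \<and> n = p * m)"

end

theory Submission
  imports "Berlekamp_Zassenhaus.Factor_Bound" "HOL-Number_Theory.Number_Theory" Defs
begin

definition prim :: "nat \<Rightarrow> complex set" where
  "prim n = {z. z ^ n = 1 \<and> (\<forall>k. z ^ k = 1 \<longrightarrow> n dvd k)}"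

definition cp :: "nat \<Rightarrow> complex poly" where
  "cp n = (\<Prod>z\<in>prim n. [:-z, 1:])"

lemma prim_sub: "prim n \<subseteq> {z. z ^ n = 1}" unfolding prim_def by auto

lemma finite_prim: "n > 0 \<Longrightarrow> finite (prim n)"
  using finite_subset[OF prim_sub finite_nth_roots] by auto

lemma prim_iff: "z \<in> prim n \<Longrightarrow> z ^ k = 1 \<longleftrightarrow> n dvd k"
  unfolding prim_def by (auto elim!: dvdE simp: power_mult)

lemma exists_prim:
  assumes "n > 0" "z ^ n = (1::complex)"
  shows "\<exists>e. e dvd n \<and> z \<in> prim e"
proof -
  define e where "e = (LEAST k. 0 < k \<and> z ^ k = 1)"
  have ex: "0 < n \<and> z ^ n = 1" using assms by auto
  have e: "0 < e \<and> z ^ e = 1" unfolding e_def by (rule LeastI[of _ n]) (use ex in auto)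
  have min: "\<And>k. 0 < k \<Longrightarrow> z ^ k = 1 \<Longrightarrow> e \<le> k" unfolding e_def by (rule Least_le) auto
  have dv: "e dvd k" if "z ^ k = 1" for k
  proof -
    have "z ^ k = z ^ (e * (k div e) + k mod e)" by simp
    also have "\<dots> = (z ^ e) ^ (k div e) * z ^ (k mod e)" by (simp only: power_add power_mult)
    finally have "z ^ k = (z ^ e) ^ (k div e) * z ^ (k mod e)" .
    with e that have zm: "z ^ (k mod e) = 1" by simp
    have lt: "k mod e < e" using e by simp
    have "k mod e = 0"
    proof (rule ccontr)
      assume "k mod e \<noteq> 0"
      then have "e \<le> k mod e" using min zm by simp
      then show False using lt by simp
    qed
    then show ?thesis by auto
  qed
  show ?thesis using e dv[OF assms(2)] by (auto simp: prim_def intro!: exI[of _ e] dv)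
qed

lemma prim_unique: "z \<in> prim e \<Longrightarrow> z \<in> prim e' \<Longrightarrow> e = e'"
  unfolding prim_def by (auto intro: dvd_antisym)

lemma roots_unity_decomp:
  assumes "n > 0"
  shows "{z::complex. z ^ n = 1} = (\<Union>e\<in>{e. e dvd n}. prim e)"
proof (intro equalityI subsetI)
  fix z assume "z \<in> {z::complex. z ^ n = 1}"
  then show "z \<in> (\<Union>e\<in>{e. e dvd n}. prim e)" using exists_prim[OF assms] by auto
next
  fix z assume "z \<in> (\<Union>e\<in>{e. e dvd n}. prim e)"
  then obtain e where "e dvd n" "z \<in> prim e" by auto
  then show "z \<in> {z::complex. z ^ n = 1}" using prim_iff by auto
qed

lemma prod_lin_dvd:
  fixes f :: "'a::idom poly"
  assumes "finite S" "\<And>z. z \<in> S \<Longrightarrow> poly f z = 0"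
  shows "(\<Prod>z\<in>S. [:-z,1:]) dvd f"
  using assms
proof (induction S arbitrary: f rule: finite_induct)
  case empty then show ?case by simp
next
  case (insert a S)
  have "[:-a,1:] dvd f" using insert.prems by (simp add: poly_eq_0_iff_dvd)
  then obtain g where g: "f = [:-a,1:] * g" by (elim dvdE)
  have "poly g z = 0" if "z \<in> S" for z
  proof -
    have "poly f z = 0" using insert.prems that by auto
    moreover have "z \<noteq> a" using insert.hyps that by auto
    ultimately show ?thesis using g by simp
  qed
  then have "(\<Prod>z\<in>S. [:-z,1:]) dvd g" by (rule insert.IH)
  moreover have "(\<Prod>z\<in>insert a S. [:-z,1:]) = [:-a,1:] * (\<Prod>z\<in>S. [:-z,1:])"
    using insert.hyps by simp
  ultimately show ?case using g by (metis dvd_refl mult_dvd_mono)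
qed

lemma monic_dvd_eq:
  fixes a b :: "'a::idom poly"
  assumes "monic a" "monic b" "a dvd b" "degree a = degree b"
  shows "a = b"
proof -
  from assms(3) obtain c where c: "b = a * c" by (elim dvdE)
  have c0: "c \<noteq> 0" using c assms(2) by auto
  have a0: "a \<noteq> 0" using assms(1) by auto
  have "degree b = degree a + degree c" using c c0 a0 by (simp add: degree_mult_eq)
  hence "degree c = 0" using assms(4) by simp
  then obtain k where k: "c = [:k:]" by (metis degree_eq_zeroE)
  have "lead_coeff b = lead_coeff a * lead_coeff c" using c by (simp add: lead_coeff_mult)
  hence "k = 1" using assms k by simp
  thus ?thesis using c k by simp
qed

lemma degree_prod_lin:
  fixes S :: "'a::idom set"
  shows "finite S \<Longrightarrow> degree (\<Prod>z\<in>S. [:-z,1:]) = card S"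
  by (subst degree_prod_eq_sum_degree) auto

lemma monic_prod_lin: "monic (\<Prod>z\<in>S. [:-(z::'a::idom),1:])"
  by (simp add: lead_coeff_prod)

lemma prod_roots_eq:
  fixes f :: "'a::idom poly"
  assumes "monic f" "finite S" "card S = degree f" "\<And>z. z\<in>S \<Longrightarrow> poly f z = 0"
  shows "f = (\<Prod>z\<in>S. [:-z,1:])"
proof (rule monic_dvd_eq[symmetric])
  show "monic (\<Prod>z\<in>S. [:-z,1:])" by (rule monic_prod_lin)
  show "monic f" by (rule assms)
  show "(\<Prod>z\<in>S. [:-z,1:]) dvd f" by (rule prod_lin_dvd) (use assms in auto)
  show "degree (\<Prod>z\<in>S. [:-z,1:]) = degree f" using degree_prod_lin[OF assms(2)] assms(3) by simp
qed

lemma degree_xn1: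
  assumes "n > 0" shows "degree (monom (1::'a::comm_ring_1) n - 1) = n"
proof (rule antisym)
  show "degree (monom (1::'a) n - 1) \<le> n" by (rule degree_diff_le) (auto simp: degree_monom_le)
  have "coeff (monom (1::'a) n - 1) n = 1" using assms by (simp add: coeff_1)
  then show "n \<le> degree (monom (1::'a) n - 1)" by (intro le_degree) simp
qed

lemma monic_xn1: "n > 0 \<Longrightarrow> monic (monom (1::'a::comm_ring_1) n - 1)"
  by (simp add: degree_xn1)

lemma xn1_prod: "n > 0 \<Longrightarrow> monom 1 n - 1 = (\<Prod>z\<in>{z::complex. z^n=1}. [:-z,1:])"
proof (rule prod_roots_eq)
  assume n: "n > 0"
  show "monic (monom (1::complex) n - 1)" using n by (rule monic_xn1)
  show "finite {z::complex. z^n=1}" using n by (rule finite_nth_roots)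
  show "card {z::complex. z^n=1} = degree (monom (1::complex) n - 1)"
    using n by (simp add: degree_xn1 card_roots_unity_eq)
  show "poly (monom 1 n - 1) z = 0" if "z \<in> {z::complex. z^n=1}" for z
    using that by (simp add: poly_monom)
qed

lemma xn1_cp:
  assumes "n > 0"
  shows "monom 1 n - (1::complex poly) = (\<Prod>e\<in>{e. e dvd n}. cp e)"
proof -
  have fin: "finite {e. e dvd n}" using assms by simp
  have "monom 1 n - (1::complex poly) = (\<Prod>z\<in>(\<Union>e\<in>{e. e dvd n}. prim e). [:-z,1:])"
    using xn1_prod[OF assms] roots_unity_decomp[OF assms] by simp
  also have "\<dots> = (\<Prod>e\<in>{e. e dvd n}. cp e)" unfolding cp_def
  proof (rule prod.UNION_disjoint)
    show "finite {e. e dvd n}" by (rule fin)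
    show "\<forall>i\<in>{e. e dvd n}. finite (prim i)"
      using assms by (auto intro!: finite_prim intro: Nat.gr0I)
    show "\<forall>i\<in>{e. e dvd n}. \<forall>j\<in>{e. e dvd n}. i \<noteq> j \<longrightarrow> prim i \<inter> prim j = {}"
      using prim_unique by blast
  qed
  finally show ?thesis .
qed

lemma int_quot:
  fixes A :: "'a::field_char_0 poly"
  assumes "monic b" "of_int_poly c = A * of_int_poly b"
  shows "\<exists>q. A = of_int_poly q \<and> c = b * q"
proof -
  obtain q r where qr: "pseudo_divmod c b = (q, r)" by force
  have b0: "b \<noteq> 0" using assms(1) by auto
  have "smult (lead_coeff b ^ (Suc (degree c) - degree b)) c = b * q + r"
    by (rule pseudo_divmod(1)[OF b0 qr])
  hence cq: "c = b * q + r" using assms(1) by simp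
  have r: "r = 0 \<or> degree r < degree b" by (rule pseudo_divmod(2)[OF b0 qr])
  have "of_int_poly c = (of_int_poly b :: 'a poly) * of_int_poly q + of_int_poly r"
    unfolding cq by (simp add: of_int_poly_hom.hom_add of_int_poly_hom.hom_mult)
  with assms(2) have eq: "(A - of_int_poly q) * of_int_poly b = (of_int_poly r :: 'a poly)"
    by (simp add: algebra_simps)
  have B0: "(of_int_poly b :: 'a poly) \<noteq> 0" using b0 by simp
  have "A = of_int_poly q"
  proof (rule ccontr)
    assume ne: "A \<noteq> of_int_poly q"
    then have "degree ((A - of_int_poly q) * (of_int_poly b :: 'a poly)) = degree (A - of_int_poly q) + degree b"
      using B0 by (simp add: degree_mult_eq)
    with eq have "degree (of_int_poly r :: 'a poly) \<ge> degree b" by simp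
    moreover have "(of_int_poly r :: 'a poly) \<noteq> 0" using eq ne B0 by auto
    ultimately show False using r by auto
  qed
  with eq have "(of_int_poly r :: 'a poly) = 0" by simp
  hence "r = 0" by simp
  with cq \<open>A = of_int_poly q\<close> show ?thesis by auto
qed

lemma monic_cp: "monic (cp n)" unfolding cp_def by (rule monic_prod_lin)

lemma degree_cp: "n > 0 \<Longrightarrow> degree (cp n) = card (prim n)"
  unfolding cp_def by (rule degree_prod_lin[OF finite_prim])

lemma cp_int: "n > 0 \<Longrightarrow> \<exists>i. cp n = of_int_poly i"
proof (induction n rule: less_induct)
  case (less n)
  define D where "D = {e. e dvd n \<and> e \<noteq> n}"
  have finD: "finite D" unfolding D_def using less.prems by simp
  have "\<forall>e\<in>D. \<exists>i. cp e = of_int_poly i"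
  proof
    fix e assume "e \<in> D"
    then have "e dvd n" "e \<noteq> n" unfolding D_def by auto
    then have "e < n" "e > 0" using less.prems dvd_imp_le by (auto intro: Nat.gr0I) 
    then show "\<exists>i. cp e = of_int_poly i" using less.IH by blast
  qed
  then obtain I where I: "\<forall>e\<in>D. cp e = of_int_poly (I e)" by metis
  have PI: "(\<Prod>e\<in>D. cp e) = of_int_poly (\<Prod>e\<in>D. I e)"
    using I by (simp add: of_int_poly_hom.hom_prod)
  have split: "{e. e dvd n} = insert n D" unfolding D_def by auto
  have "n \<notin> D" unfolding D_def by auto
  have "monom 1 n - (1::complex poly) = cp n * (\<Prod>e\<in>D. cp e)"
    using xn1_cp[OF less.prems] split finD \<open>n \<notin> D\<close> by simp
  also have "monom 1 n - (1::complex poly) = of_int_poly (monom 1 n - 1)"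
    by (simp add: of_int_poly_hom.hom_minus)
  finally have eq: "of_int_poly (monom 1 n - 1) = cp n * of_int_poly (\<Prod>e\<in>D. I e)"
    using PI by simp
  have "lead_coeff (\<Prod>e\<in>D. cp e) = 1" by (simp add: lead_coeff_prod monic_cp)
  hence "lead_coeff (of_int_poly (\<Prod>e\<in>D. I e) :: complex poly) = 1" using PI by simp
  hence "(of_int (lead_coeff (\<Prod>e\<in>D. I e)) :: complex) = 1" by (simp only: of_int_hom.hom_lead_coeff)
  hence "monic (\<Prod>e\<in>D. I e)" by simp
  from int_quot[OF this eq] show ?case by blast
qed

definition icp :: "nat \<Rightarrow> int poly" where
  "icp n = (SOME i. cp n = of_int_poly i)"

lemma icp: "n > 0 \<Longrightarrow> of_int_poly (icp n) = cp n"
  unfolding icp_def using someI_ex[OF cp_int] by metis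

lemma monic_icp: "n > 0 \<Longrightarrow> monic (icp n)"
  using monic_cp[of n] icp[of n] by (metis of_int_hom.hom_lead_coeff of_int_eq_1_iff)

lemma degree_icp: "n > 0 \<Longrightarrow> degree (icp n) = card (prim n)"
  using degree_cp[of n] icp[of n] by (metis of_int_hom.degree_map_poly_hom)

definition zeta :: "nat \<Rightarrow> complex" where
  "zeta n = cis (2 * pi / real n)"

lemma zeta_pow: "zeta n ^ k = cis (2 * pi * real k / real n)"
  unfolding zeta_def by (simp add: DeMoivre mult_ac)

lemma zeta_pow_eq_1:
  assumes "n > 0"
  shows "zeta n ^ k = 1 \<longleftrightarrow> n dvd k"
proof
  assume "zeta n ^ k = 1"
  then have "cos (2 * pi * real k / real n) = 1" unfolding zeta_pow by (simp add: complex_eq_iff)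
  then obtain m :: int where m: "2 * pi * real k / real n = real_of_int m * (2 * pi)"
    by (auto simp: cos_one_2pi_int)
  then have "real k = real_of_int m * real n" using assms by (simp add: field_simps)
  then have "real_of_int (int k) = real_of_int (m * int n)" by simp
  then have "int k = m * int n" by (simp only: of_int_eq_iff)
  then have "int n dvd int k" by simp
  then show "n dvd k" by (simp only: int_dvd_int_iff)
next
  assume "n dvd k"
  then obtain c where "k = n * c" by auto
  moreover have "zeta n ^ n = 1" unfolding zeta_pow using assms by simp
  ultimately show "zeta n ^ k = 1" by (simp add: power_mult)
qed

lemma zeta_prim: assumes "n > 0" shows "zeta n \<in> prim n"
  unfolding prim_def by (simp add: zeta_pow_eq_1[OF assms])

lemma prim_zeta_pow:
  assumes "n > 0" "z \<in> prim n"
  shows "\<exists>k. gcd k n = 1 \<and> z = zeta n ^ k"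
proof -
  have "z ^ n = 1" using assms(2) prim_sub by auto
  then have "z \<in> (\<lambda>k. cis (2 * pi * real k / real n)) ` {..<n}"
    using bij_betw_imp_surj_on[OF bij_betw_roots_unity[OF assms(1)]] by simp
  then obtain k where k: "k < n" "z = cis (2 * pi * real k / real n)" by auto
  then have zk: "z = zeta n ^ k" by (simp add: zeta_pow)
  define g where "g = gcd k n"
  have g0: "g > 0" unfolding g_def using assms(1) by simp
  have "z ^ (n div g) = zeta n ^ (k * (n div g))" using zk by (simp add: power_mult)
  also have "k * (n div g) = n * (k div g)"
  proof -
    have "g dvd n" "g dvd k" unfolding g_def by auto
    then have "k * (n div g) = k * n div g" "n * (k div g) = n * k div g" by (simp_all add: div_mult_swap)
    then show ?thesis by (simp add: mult.commute)
  qed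
  also have "zeta n ^ (n * (k div g)) = 1" using zeta_pow_eq_1[OF assms(1)] by simp
  finally have "n dvd n div g" using prim_iff[OF assms(2)] by simp
  moreover have "n div g > 0" unfolding g_def using assms(1)
    by (simp add: div_greater_zero_iff gcd_le2_nat)
  ultimately have "n \<le> n div g" by (simp add: dvd_imp_le)
  have "g = 1"
  proof (rule ccontr)
    assume "g \<noteq> 1"
    then have "1 < g" using g0 by simp
    then have "n div g < n" using assms(1) by (rule div_less_dividend)
    then show False using \<open>n \<le> n div g\<close> by simp
  qed
  then have "gcd k n = 1" unfolding g_def .
  then show ?thesis using zk by (intro exI[of _ k] conjI)
qed

lemma frob_binom:
  fixes u v :: "'a::comm_ring_1"
  assumes p: "prime p"
  shows "of_nat p dvd ((u + v) ^ p - u ^ p - v ^ p)"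
proof -
  have p0: "p > 0" using p prime_gt_0_nat by blast
  have "(u + v) ^ p = (\<Sum>k\<le>p. of_nat (p choose k) * u ^ k * v ^ (p - k))"
    by (rule binomial_ring)
  also have "{..p} = insert p (insert 0 {1..<p})" using p0 by auto
  also have "(\<Sum>k\<in>insert p (insert 0 {1..<p}). of_nat (p choose k) * u ^ k * v ^ (p - k))
      = u ^ p + (v ^ p + (\<Sum>k\<in>{1..<p}. of_nat (p choose k) * u ^ k * v ^ (p - k)))"
    using p0 by (simp add: sum.insert)
  finally have eq: "(u + v) ^ p - u ^ p - v ^ p = (\<Sum>k\<in>{1..<p}. of_nat (p choose k) * u ^ k * v ^ (p - k))"
    by (simp add: algebra_simps)
  have "of_nat p dvd (\<Sum>k\<in>{1..<p}. of_nat (p choose k) * u ^ k * v ^ (p - k))"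
  proof (rule dvd_sum)
    fix k assume "k \<in> {1..<p}"
    then have "p dvd p choose k" using p by (intro dvd_choose_prime) auto
    then obtain c where "p choose k = p * c" by (elim dvdE)
    then have "(of_nat p :: 'a) dvd of_nat (p choose k)" by simp
    then show "of_nat p dvd of_nat (p choose k) * u ^ k * v ^ (p - k)"
      by (simp add: dvd_mult2 mult.assoc)
  qed
  then show ?thesis using eq by simp
qed

lemma fermat_int:
  fixes a :: int
  assumes p: "prime p"
  shows "int p dvd a ^ p - a"
proof -
  define b where "b = nat (a mod int p)"
  have p0: "p > 0" using p prime_gt_0_nat by blast
  have bb: "int b = a mod int p" unfolding b_def using p0 by simp
  have ab: "[a = int b] (mod int p)" unfolding cong_def bb by simp
  have bp: "[b ^ p = b] (mod p)"
  proof (cases "p dvd b")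
    case True
    then have b0: "[b = 0] (mod p)" by (simp add: cong_0_iff)
    then have "[b ^ p = 0 ^ p] (mod p)" by (rule cong_pow)
    moreover have "(0::nat) ^ p = 0" using p0 by simp
    ultimately have "[b ^ p = 0] (mod p)" by simp
    then show ?thesis using cong_sym[OF b0] by (rule cong_trans)
  next
    case False
    have "[b ^ (p - 1) = 1] (mod p)" by (rule fermat_theorem[OF p False])
    then have "[b ^ (p - 1) * b = 1 * b] (mod p)" by (rule cong_mult) simp
    moreover have "b ^ (p - 1) * b = b ^ p" using p0 by (cases p) (simp_all add: power_Suc2)
    ultimately show ?thesis by simp
  qed
  have "[int (b ^ p) = int b] (mod int p)" using bp by (simp only: cong_int_iff)
  then have c1: "[int b ^ p = int b] (mod int p)" by simp
  have c2: "[a ^ p = int b ^ p] (mod int p)" using ab by (rule cong_pow)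
  have "[a ^ p = int b] (mod int p)" using c2 c1 by (rule cong_trans)
  then have "[a ^ p = a] (mod int p)" using cong_sym[OF ab] by (rule cong_trans)
  then show ?thesis by (simp add: cong_iff_dvd_diff)
qed

lemma ring_rearr:
  fixes P A a X h G :: "'a::comm_ring_1"
  shows "P - (a + X * G) = (P - A - X * h) + (A - a) + X * (h - G)"
  by (simp add: algebra_simps)

lemma frob_poly:
  fixes f :: "int poly"
  assumes p: "prime p"
  shows "of_nat p dvd (f ^ p - f \<circ>\<^sub>p monom 1 p)"
proof (induction f rule: pCons_induct)
  case 0
  have p0: "p > 0" using p prime_gt_0_nat by blast
  then show ?case by (simp add: power_0_left)
next
  case (pCons a g)
  have p0: "p > 0" using p prime_gt_0_nat by blast
  define X :: "int poly" where "X = monom 1 p"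
  have X: "[:0,1:] ^ p = X" unfolding X_def by (simp only: x_as_monom x_pow_n)
  have f: "pCons a g = [:a:] + [:0,1:] * g" by (simp add: pCons_0_as_mult[symmetric])
  have c: "pCons a g \<circ>\<^sub>p X = [:a:] + X * (g \<circ>\<^sub>p X)" by (simp add: pcompose_pCons)
  have d1: "of_nat p dvd (pCons a g ^ p - [:a:] ^ p - ([:0,1:] * g) ^ p)"
    unfolding f by (rule frob_binom[OF p])
  have "int p dvd a ^ p - a" by (rule fermat_int[OF p])
  then have "[:int p:] dvd [:a ^ p - a:]" by (simp add: const_poly_dvd_const_poly_iff)
  moreover have "[:a ^ p - a:] = [:a:] ^ p - [:a:]"
    by (simp only: coeff_lift_hom.hom_power coeff_lift_hom.hom_minus)
  moreover have "[:int p:] = (of_nat p :: int poly)"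
    by (metis coeff_lift_hom.hom_of_nat of_nat_eq_id id_apply)
  ultimately have d2: "of_nat p dvd ([:a:] ^ p - [:a:] :: int poly)" by simp
  have d3: "of_nat p dvd (X * (g ^ p - g \<circ>\<^sub>p X))" using pCons.IH unfolding X_def by simp
  have "pCons a g ^ p - pCons a g \<circ>\<^sub>p X =
        (pCons a g ^ p - [:a:] ^ p - ([:0,1:] * g) ^ p) + ([:a:] ^ p - [:a:]) + X * (g ^ p - g \<circ>\<^sub>p X)"
  proof -
    have e: "([:0,1:] * g) ^ p = X * g ^ p" by (simp only: power_mult_distrib X)
    show ?thesis unfolding c e by (rule ring_rearr)
  qed
  also have "of_nat p dvd \<dots>" using d1 d2 d3 by (intro dvd_add)
  finally show ?case unfolding X_def .
qed

definition mdiv :: "int poly \<Rightarrow> int poly \<Rightarrow> int poly" where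
  "mdiv f g = fst (pseudo_divmod f g)"
definition mmod :: "int poly \<Rightarrow> int poly \<Rightarrow> int poly" where
  "mmod f g = snd (pseudo_divmod f g)"

lemma monic_divmod:
  fixes f g :: "int poly"
  assumes "monic g"
  shows "f = g * mdiv f g + mmod f g" "mmod f g = 0 \<or> degree (mmod f g) < degree g"
proof -
  have g0: "g \<noteq> 0" using assms by auto
  have pd: "pseudo_divmod f g = (mdiv f g, mmod f g)" unfolding mdiv_def mmod_def by simp
  from pseudo_divmod(1)[OF g0 pd] assms show "f = g * mdiv f g + mmod f g" by simp
  from pseudo_divmod(2)[OF g0 pd] show "mmod f g = 0 \<or> degree (mmod f g) < degree g" .
qed

lemma small_dvd_zero:
  fixes f r :: "'a::idom poly"
  assumes "f dvd r" "degree r < degree f"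
  shows "r = 0"
proof (rule ccontr)
  assume "r \<noteq> 0"
  then have "degree f \<le> degree r" using assms(1) by (rule dvd_imp_degree_le[rotated])
  then show False using assms(2) by simp
qed

lemma monom_pcompose_monom: "(monom (1::'a::comm_ring_1) p) \<circ>\<^sub>p (monom 1 j) = monom 1 (j * p)"
proof -
  have "(monom (1::'a) p) \<circ>\<^sub>p (monom 1 j) = ([:0,1:] ^ p) \<circ>\<^sub>p (monom 1 j)"
    by (simp only: x_as_monom x_pow_n)
  also have "\<dots> = ([:0,1:] \<circ>\<^sub>p (monom 1 j)) ^ p" by (rule pcompose_hom.hom_power)
  also have "[:0,1:] \<circ>\<^sub>p (monom (1::'a) j) = monom 1 j" by (simp add: pcompose_pCons)
  also have "(monom (1::'a) j) ^ p = monom 1 (j * p)" by (simp add: monom_power)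
  finally show ?thesis .
qed

lemma of_int_poly_monom: "of_int_poly (monom 1 j) = (monom 1 j :: 'a::comm_ring_1 poly)"
  by (simp add: map_poly_monom)

lemma landau:
  fixes f :: "int poly"
  assumes n: "n > 0" and mf: "monic f" and fz: "poly (of_int_poly f) (zeta n) = (0::complex)"
    and star: "\<And>h. poly (of_int_poly h) (zeta n) = (0::complex) \<Longrightarrow> f dvd h"
    and z: "z \<in> prim n"
  shows "poly (of_int_poly f) z = (0::complex)"
proof -
  define w where "w = zeta n"
  define F where "F j = f \<circ>\<^sub>p monom 1 j" for j :: nat
  define Rm where "Rm j = mmod (F j) f" for j
  have df: "degree f > 0"
  proof (rule ccontr)
    assume "\<not> degree f > 0"
    then have "degree f = 0" by simp
    then have "f = [:lead_coeff f:]" by (metis degree_0_id) 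
    then have "f = 1" using mf by simp
    then show False using fz by simp
  qed
  have F_eval: "poly (of_int_poly (F j)) w = poly (of_int_poly f) (w ^ j)" for j
    unfolding F_def by (simp add: of_int_hom.map_poly_pcompose poly_pcompose of_int_poly_monom poly_monom)
  have Rm_small: "degree (Rm j) < degree f" for j
    using monic_divmod(2)[OF mf, of "F j"] df unfolding Rm_def by auto
  have Rm_eq: "F j = f * mdiv (F j) f + Rm j" for j unfolding Rm_def by (rule monic_divmod(1)[OF mf])
  have Rm_eval: "poly (of_int_poly (Rm j)) w = poly (of_int_poly f) (w ^ j)" for j
  proof -
    have "poly (of_int_poly (F j)) w = poly (of_int_poly f) w * poly (of_int_poly (mdiv (F j) f)) w
        + poly (of_int_poly (Rm j)) (w::complex)"
      by (subst Rm_eq) (simp add: of_int_poly_hom.hom_add of_int_poly_hom.hom_mult)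
    then show ?thesis using fz F_eval unfolding w_def by simp
  qed
  have uniq: "r1 = r2" if "degree r1 < degree f" "degree r2 < degree f"
     "poly (of_int_poly r1) w = (poly (of_int_poly r2) w :: complex)" for r1 r2
  proof -
    have "poly (of_int_poly (r1 - r2)) w = (0::complex)" using that(3) by (simp add: of_int_poly_hom.hom_minus)
    then have "f dvd r1 - r2" using star unfolding w_def by blast
    moreover have "degree (r1 - r2) < degree f"
      using that(1,2) degree_diff_le_max[of r1 r2] by simp
    ultimately have "r1 - r2 = 0" by (rule small_dvd_zero)
    then show ?thesis by simp
  qed
  have wn: "w ^ n = 1" unfolding w_def using zeta_pow_eq_1[OF n] by simp
  have wmod: "w ^ j = w ^ (j mod n)" for j
  proof -
    have "w ^ j = w ^ (n * (j div n) + j mod n)" by simp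
    also have "\<dots> = (w ^ n) ^ (j div n) * w ^ (j mod n)" by (simp only: power_add power_mult)
    finally show ?thesis using wn by simp
  qed
  have Rm_per: "Rm j = Rm (j mod n)" for j
    by (rule uniq[OF Rm_small Rm_small]) (simp add: Rm_eval wmod[of j])
  define B where "B = 1 + (\<Sum>j<n. \<Sum>i<degree f. \<bar>coeff (Rm j) i\<bar>)"
  have bound: "\<bar>coeff (Rm j) i\<bar> < B" for j i
  proof (cases "i < degree f")
    case False
    then have "coeff (Rm j) i = 0" using Rm_small[of j] by (intro coeff_eq_0) simp
    moreover have "0 \<le> (\<Sum>j<n. \<Sum>i<degree f. \<bar>coeff (Rm j) i\<bar>)" by (intro sum_nonneg) auto
    ultimately show ?thesis unfolding B_def by simp
  next
    case True
    have "\<bar>coeff (Rm j) i\<bar> = \<bar>coeff (Rm (j mod n)) i\<bar>" using Rm_per by simp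
    also have "\<dots> \<le> (\<Sum>i<degree f. \<bar>coeff (Rm (j mod n)) i\<bar>)"
      using True by (intro member_le_sum) auto
    also have "\<dots> \<le> (\<Sum>j<n. \<Sum>i<degree f. \<bar>coeff (Rm j) i\<bar>)"
      using n by (intro member_le_sum[of "j mod n"]) (auto intro: sum_nonneg)
    finally show ?thesis unfolding B_def by simp
  qed
  have step: "poly (of_int_poly f) (w ^ (j * p)) = (0::complex)"
    if pj: "poly (of_int_poly f) (w ^ j) = (0::complex)" and p: "prime p" and pB: "B \<le> int p" for j p
  proof -
    have p0: "p > 0" using p prime_gt_0_nat by blast
    have "f dvd F j" using star F_eval pj unfolding w_def by simp
    then obtain u where u: "F j = f * u" by (elim dvdE)
    from frob_poly[OF p, of f] obtain h where h: "f ^ p - F p = of_nat p * h"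
      unfolding F_def by (elim dvdE)
    define H where "H = h \<circ>\<^sub>p monom 1 j"
    have "(f ^ p - F p) \<circ>\<^sub>p monom 1 j = F j ^ p - F (j * p)"
      unfolding F_def by (simp add: pcompose_diff pcompose_hom.hom_power pcompose_assoc[symmetric]
          monom_pcompose_monom)
    moreover have "(of_nat p * h) \<circ>\<^sub>p monom 1 j = of_nat p * H"
      unfolding H_def by (simp add: pcompose_mult of_nat_poly pcompose_const pcompose_smult)
    ultimately have FF: "F j ^ p - F (j * p) = of_nat p * H" using h by simp
    define Hr where "Hr = mmod H f"
    have Heq: "H = f * mdiv H f + Hr" unfolding Hr_def by (rule monic_divmod(1)[OF mf])
    have Hr_small: "degree Hr < degree f"
      using monic_divmod(2)[OF mf, of H] df unfolding Hr_def by auto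
    define Q where "Q = mdiv (F (j*p)) f"
    define Hq where "Hq = mdiv H f"
    have e1: "Rm (j * p) = F (j * p) - f * Q" using Rm_eq[of "j * p"] unfolding Q_def by (simp add: algebra_simps)
    have e2: "F (j * p) = F j ^ p - of_nat p * H" using FF by (simp add: algebra_simps)
    have e3: "H = f * Hq + Hr" using Heq unfolding Hq_def .
    have key: "Rm (j * p) + of_nat p * Hr = F j ^ p - f * (Q + of_nat p * Hq)"
      unfolding e1 e2 by (subst e3) (simp add: algebra_simps)
    have "F j ^ p = F j * F j ^ (p - 1)" using p0 by (cases p) auto
    then have "f dvd F j ^ p" using \<open>f dvd F j\<close> by (metis dvd_mult2)
    then have "f dvd Rm (j * p) + of_nat p * Hr" unfolding key by (intro dvd_diff) auto
    moreover have "degree (Rm (j * p) + of_nat p * Hr) < degree f"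
    proof -
      have "degree (of_nat p * Hr) \<le> degree Hr" by (simp add: of_nat_poly degree_smult_le)
      then show ?thesis using degree_add_le_max[of "Rm (j * p)" "of_nat p * Hr"] Rm_small[of "j * p"] Hr_small
        by simp
    qed
    ultimately have "Rm (j * p) + of_nat p * Hr = 0" by (rule small_dvd_zero)
    then have R: "Rm (j * p) = - (of_nat p * Hr)" by (simp add: eq_neg_iff_add_eq_0)
    have "Rm (j * p) = 0"
    proof (rule poly_eqI)
      fix i
      have ci: "coeff (Rm (j * p)) i = - (int p * coeff Hr i)" unfolding R by (simp add: of_nat_poly)
      show "coeff (Rm (j * p)) i = coeff 0 i"
      proof (rule ccontr)
        assume "coeff (Rm (j * p)) i \<noteq> coeff 0 i"
        then have ne: "coeff (Rm (j * p)) i \<noteq> 0" by simp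
        have "int p dvd coeff (Rm (j * p)) i" unfolding ci by simp
        then have "\<bar>int p\<bar> \<le> \<bar>coeff (Rm (j * p)) i\<bar>" using ne by (rule dvd_imp_le_int[rotated])
        then show False using bound[of "j * p" i] pB by simp
      qed
    qed
    then show ?thesis using Rm_eval[of "j * p"] by simp
  qed
  have allk: "poly (of_int_poly f) (w ^ k) = (0::complex)"
    if "k > 0" "\<forall>q. prime q \<and> q dvd k \<longrightarrow> B \<le> int q" for k
    using that
  proof (induction k rule: less_induct)
    case (less k)
    show ?case
    proof (cases "k = 1")
      case True then show ?thesis using fz unfolding w_def by simp
    next
      case False
      obtain q where q: "prime q" "q dvd k" using prime_factor_nat[OF False] by blast
      then obtain k' where k': "k = k' * q" by (metis dvd_def mult.commute)
      have q1: "q > 1" using q(1) prime_gt_1_nat by blast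
      have k'0: "k' > 0" using less.prems(1) k' by (simp add: Nat.gr0I)
      have "k' < k" using k' q1 k'0 by simp
      moreover have "\<forall>q'. prime q' \<and> q' dvd k' \<longrightarrow> B \<le> int q'"
        using less.prems(2) k' by (auto intro: dvd_mult2)
      ultimately have "poly (of_int_poly f) (w ^ k') = (0::complex)" using less.IH k'0 by blast
      moreover have "B \<le> int q" using less.prems(2) q by blast
      ultimately show ?thesis using step q(1) k' by blast
    qed
  qed
  from prim_zeta_pow[OF n z] obtain k where k0: "gcd k n = 1" "z = zeta n ^ k" by (elim exE conjE)
  then have k: "gcd k n = 1" "z = w ^ k" unfolding w_def by auto
  define S where "S = {q. prime q \<and> int q < B \<and> \<not> q dvd k}"
  have finS: "finite S" unfolding S_def by (rule finite_subset[of _ "{..nat B}"]) auto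
  define T where "T = (\<Prod>q\<in>S. q)"
  have T0: "T > 0" unfolding T_def using finS by (intro prod_pos) (auto simp: S_def prime_gt_0_nat)
  define k' where "k' = k + n * T"
  have k'0: "k' > 0" unfolding k'_def using n T0 by simp
  have "w ^ k' = w ^ k" unfolding k'_def by (simp add: power_add power_mult wn)
  moreover have "\<forall>q. prime q \<and> q dvd k' \<longrightarrow> B \<le> int q"
  proof (intro allI impI)
    fix q assume qq: "prime q \<and> q dvd k'"
    show "B \<le> int q"
    proof (rule ccontr)
      assume "\<not> B \<le> int q" then have qB: "int q < B" by simp
      show False
      proof (cases "q dvd k")
        case True
        have "\<not> q dvd T"
        proof
          assume "q dvd T"
          then obtain q' where q': "q' \<in> S" "q dvd q'"
            using prime_dvd_prod_iff[OF finS, of q "\<lambda>x. x"] qq unfolding T_def by auto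
          then have "prime q'" unfolding S_def by simp
          then have "q = q'" using q'(2) qq by (intro primes_dvd_imp_eq) auto
          then show False using q'(1) True unfolding S_def by simp
        qed
        moreover have "q dvd n * T"
        proof -
          have "q dvd k' - k" using qq True by (intro dvd_diff_nat) auto
          then show ?thesis unfolding k'_def by simp
        qed
        ultimately have "q dvd n" using qq prime_dvd_mult_iff by blast
        then have "q dvd gcd k n" using True by simp
        then have "q dvd 1" using k(1) by simp
        then show False using qq by (simp add: prime_nat_iff)
      next
        case False
        then have "q \<in> S" using qq qB unfolding S_def by simp
        then have "q dvd T" unfolding T_def using finS by (intro dvd_prodI) auto
        then have "q dvd n * T" by simp
        then have "q dvd k' - n * T" using qq by (intro dvd_diff_nat) auto
        then have "q dvd k" unfolding k'_def by simp
        then show False using False by simp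
      qed
    qed
  qed
  ultimately show ?thesis using allk[OF k'0] k(2) by simp
qed

lemma rc_of_int: "map_poly of_rat (of_int_poly h :: rat poly) = (of_int_poly h :: complex poly)"
  by (simp add: map_poly_map_poly o_def)

lemma rc_mult: "map_poly (of_rat :: rat \<Rightarrow> complex) (p * q) = map_poly of_rat p * map_poly of_rat q"
  by (induct p) (auto simp: hom_distribs)

lemma rc_xn1: "map_poly of_rat (monom 1 n - 1 :: rat poly) = (monom 1 n - 1 :: complex poly)"
proof -
  have "(monom 1 n - 1 :: rat poly) = of_int_poly (monom 1 n - 1)"
    by (simp only: of_int_poly_hom.hom_minus of_int_poly_monom of_int_poly_hom.hom_one)
  then have "map_poly of_rat (monom 1 n - 1 :: rat poly) = (of_int_poly (monom 1 n - 1) :: complex poly)"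
    by (simp only: rc_of_int)
  also have "\<dots> = monom 1 n - 1"
    by (simp only: of_int_poly_hom.hom_minus of_int_poly_monom of_int_poly_hom.hom_one)
  finally show ?thesis .
qed

definition minp :: "complex \<Rightarrow> rat poly \<Rightarrow> bool" where
  "minp z f0 \<longleftrightarrow> f0 \<noteq> 0 \<and> poly (map_poly of_rat f0) z = 0 \<and>
     (\<forall>g. g \<noteq> 0 \<and> poly (map_poly of_rat g) z = 0 \<longrightarrow> degree f0 \<le> degree g)"

lemma min_poly:
  assumes n: "n > 0"
  shows "\<exists>f0. minp (zeta n) f0"
proof -
  define P where "P d \<longleftrightarrow> (\<exists>g::rat poly. g \<noteq> 0 \<and> poly (map_poly of_rat g) (zeta n) = (0::complex) \<and> degree g = d)" for d
  have "P n"
  proof -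
    have "(monom 1 n - 1 :: rat poly) \<noteq> 0"
    proof
      assume z: "(monom 1 n - 1 :: rat poly) = 0"
      have "lead_coeff (monom 1 n - 1 :: rat poly) = 1" by (rule monic_xn1[OF n])
      then show False unfolding z by simp
    qed
    moreover have "poly (map_poly of_rat (monom 1 n - 1 :: rat poly)) (zeta n) = (0::complex)"
      unfolding rc_xn1 using zeta_pow_eq_1[OF n, of n] by (simp add: poly_monom)
    moreover have "degree (monom 1 n - 1 :: rat poly) = n" by (rule degree_xn1[OF n])
    ultimately show ?thesis unfolding P_def by blast
  qed
  define d0 where "d0 = (LEAST d. P d)"
  have "P d0" unfolding d0_def using \<open>P n\<close> by (rule LeastI)
  then obtain f0 where f0: "f0 \<noteq> 0" "poly (map_poly of_rat f0) (zeta n) = (0::complex)" "degree f0 = d0"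
    unfolding P_def by blast
  have "degree f0 \<le> degree g" if "g \<noteq> 0" "poly (map_poly of_rat g) (zeta n) = (0::complex)" for g
  proof -
    have "P (degree g)" unfolding P_def using that by blast
    then have "d0 \<le> degree g" unfolding d0_def by (rule Least_le)
    then show ?thesis using f0(3) by simp
  qed
  then show ?thesis using f0 unfolding minp_def by blast
qed

lemma min_poly_dvd:
  fixes f0 g :: "rat poly" and z :: complex
  assumes m: "minp z f0"
    and g: "poly (map_poly of_rat g) z = 0"
  shows "f0 dvd g"
proof -
  have f0: "f0 \<noteq> 0" and fz: "poly (map_poly of_rat f0) z = 0"
    and mn: "\<And>g. g \<noteq> 0 \<Longrightarrow> poly (map_poly of_rat g) z = (0::complex) \<Longrightarrow> degree f0 \<le> degree g"
    using m unfolding minp_def by auto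
  have eq: "g = f0 * (g div f0) + g mod f0" by simp
  have "map_poly of_rat g = map_poly of_rat f0 * map_poly of_rat (g div f0) + (map_poly of_rat (g mod f0) :: complex poly)"
    by (subst eq) (simp add: hom_distribs)
  then have gm: "poly (map_poly of_rat (g mod f0)) z = (0::complex)"
    using fz g by (metis add.left_neutral mult_zero_left poly_add poly_mult)
  have "g mod f0 = 0"
  proof (rule ccontr)
    assume ne: "g mod f0 \<noteq> 0"
    then have "degree f0 \<le> degree (g mod f0)" using mn gm by blast
    moreover have "degree (g mod f0) < degree f0" using degree_mod_less[OF f0, of g] ne by simp
    ultimately show False by simp
  qed
  then show ?thesis by (simp add: dvd_eq_mod_eq_0)
qed

lemma int_min_poly:
  assumes n: "n > 0" and m: "minp (zeta n) f0"
  shows "\<exists>f c. monic f \<and> c \<noteq> 0 \<and> of_int_poly f = smult c f0"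
proof -
  have "poly (map_poly of_rat (monom 1 n - 1 :: rat poly)) (zeta n) = (0::complex)"
    unfolding rc_xn1 using zeta_pow_eq_1[OF n, of n] by (simp add: poly_monom)
  then have "f0 dvd (monom 1 n - 1 :: rat poly)" by (rule min_poly_dvd[OF m])
  then obtain hh where hh: "(monom 1 n - 1 :: rat poly) = f0 * hh" by (elim dvdE)
  have X: "of_int_poly (monom 1 n - 1 :: int poly) = (monom 1 n - 1 :: rat poly)"
    by (simp only: of_int_poly_hom.hom_minus of_int_poly_monom of_int_poly_hom.hom_one)
  obtain r rg where rr: "rat_to_normalized_int_poly f0 = (r, rg)" by force
  have "of_int_poly (monom 1 n - 1 :: int poly) = f0 * hh" using X hh by simp
  from rat_to_int_factor_explicit[OF this rr] obtain r' where
    r': "(monom 1 n - 1 :: int poly) = rg * smult (content (monom 1 n - 1 :: int poly)) r'" by blast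
  have "lead_coeff (monom 1 n - 1 :: int poly) = 1" by (rule monic_xn1[OF n])
  then have "lead_coeff (rg * smult (content (monom 1 n - 1 :: int poly)) r') = 1"
    unfolding r'[symmetric] .
  then have "lead_coeff rg * lead_coeff (smult (content (monom 1 n - 1 :: int poly)) r') = 1"
    by (simp only: lead_coeff_mult)
  then have lc: "lead_coeff rg = 1 \<or> lead_coeff rg = -1" by (rule pos_zmult_eq_1_iff_lemma)
  have f0r: "f0 = smult r (of_int_poly rg)" by (rule rat_to_normalized_int_poly(1)[OF rr])
  have r0: "r > 0" by (rule rat_to_normalized_int_poly(2)[OF rr])
  define f where "f = smult (lead_coeff rg) rg"
  have "lead_coeff f = lead_coeff rg * lead_coeff rg" unfolding f_def by simp
  also have "\<dots> = 1" using lc by auto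
  finally have mf: "monic f" .
  define c where "c = rat_of_int (lead_coeff rg) / r"
  have c0: "c \<noteq> 0" unfolding c_def using lc r0 by auto
  have "of_int_poly f = smult (rat_of_int (lead_coeff rg)) (of_int_poly rg)"
    unfolding f_def by (simp add: of_int_hom.map_poly_hom_smult)
  also have "of_int_poly rg = smult (inverse r) f0" using f0r r0 by simp
  finally have "of_int_poly f = smult c f0" unfolding c_def by (simp add: divide_inverse)
  then show ?thesis using mf c0 by blast
qed

lemma cyc_irr:
  assumes n: "n > 0" and q: "q \<noteq> 0" "poly (map_poly of_rat q) (zeta n) = (0::complex)"
  shows "card (prim n) \<le> degree q"
proof -
  obtain f0 where m: "minp (zeta n) f0" using min_poly[OF n] by blast
  then have f0: "f0 \<noteq> 0" "poly (map_poly of_rat f0) (zeta n) = (0::complex)" unfolding minp_def by auto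
  obtain f c where f: "monic f" "c \<noteq> 0" "of_int_poly f = smult c f0"
    using int_min_poly[OF n m] by blast
  have cf: "(of_int_poly f :: complex poly) = smult (of_rat c) (map_poly of_rat f0)"
  proof -
    have "(of_int_poly f :: complex poly) = map_poly of_rat (of_int_poly f :: rat poly)"
      by (simp only: rc_of_int)
    also have "\<dots> = smult (of_rat c) (map_poly of_rat f0)" unfolding f(3)
      by (simp add: of_rat_hom.map_poly_hom_smult)
    finally show ?thesis .
  qed
  have fz: "poly (of_int_poly f) (zeta n) = (0::complex)" using cf f0(2) by simp
  have star: "f dvd h" if h: "poly (of_int_poly h) (zeta n) = (0::complex)" for h
  proof -
    have "poly (map_poly of_rat (of_int_poly h :: rat poly)) (zeta n) = (0::complex)"
      using h by (simp only: rc_of_int)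
    then have "f0 dvd of_int_poly h" by (rule min_poly_dvd[OF m])
    then obtain w where w: "of_int_poly h = f0 * w" by (elim dvdE)
    have "f0 = smult (inverse c) (of_int_poly f)" using f(2,3) by simp
    then have "of_int_poly h = smult (inverse c) w * of_int_poly f" using w by (simp add: mult.commute)
    from int_quot[OF f(1) this] obtain u where "h = f * u" by blast
    then show ?thesis by simp
  qed
  have van: "poly (map_poly of_rat q) z = (0::complex)" if z: "z \<in> prim n" for z
  proof -
    have "poly (of_int_poly f) z = (0::complex)" by (rule landau[OF n f(1) fz star z])
    then have f0z: "poly (map_poly of_rat f0) z = (0::complex)" using cf f(2) by simp
    have "f0 dvd q" by (rule min_poly_dvd[OF m q(2)])
    then obtain v where "q = f0 * v" by (elim dvdE)
    then have "map_poly of_rat q = map_poly of_rat f0 * (map_poly of_rat v :: complex poly)"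
      by (simp add: rc_mult)
    then show ?thesis using f0z by simp
  qed
  have q0: "(map_poly of_rat q :: complex poly) \<noteq> 0" using q(1) by simp
  have "card (prim n) \<le> card {x. poly (map_poly of_rat q) x = (0::complex)}"
    by (rule card_mono) (use poly_roots_finite[OF q0] van in auto)
  also have "\<dots> \<le> degree (map_poly of_rat q :: complex poly)" by (rule card_poly_roots_bound[OF q0])
  also have "\<dots> = degree q" by simp
  finally show ?thesis .
qed

lemma monic_diff_degree:
  fixes a b :: "'a::comm_ring_1 poly"
  assumes "monic a" "monic b" "degree a = degree b" "a \<noteq> b"
  shows "degree (a - b) < degree a"
proof -
  have le: "degree (a - b) \<le> degree a" using degree_diff_le_max[of a b] assms(3) by simp
  have "coeff (a - b) (degree a) = 0" using assms by simp
  moreover have "a - b \<noteq> 0" using assms(4) by simp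
  ultimately have "degree (a - b) \<noteq> degree a" by (metis leading_coeff_0_iff)
  then show ?thesis using le by simp
qed

lemma cyclotomic_poly_eq:
  assumes n: "n > 0"
  shows "cyclotomic_poly n = icp n"
proof -
  have zd: "cis (2 * pi / real n) = zeta n" unfolding zeta_def ..
  have icz: "poly (map_poly of_int (icp n)) (zeta n) = (0::complex)"
  proof -
    have "poly (map_poly of_int (icp n)) (zeta n) = poly (cp n) (zeta n)" using icp[OF n] by simp
    also have "\<dots> = 0" unfolding cp_def using zeta_prim[OF n] finite_prim[OF n]
      by (subst poly_prod_0) auto
    finally show ?thesis .
  qed
  show ?thesis unfolding cyclotomic_poly_def zd
  proof (rule the_equality)
    show "lead_coeff (icp n) = 1 \<and> poly (map_poly of_int (icp n)) (zeta n) = (0::complex) \<and>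
      (\<forall>q::rat poly. q \<noteq> 0 \<and> poly (map_poly of_rat q) (zeta n) = (0::complex) \<longrightarrow> degree (icp n) \<le> degree q)"
      using monic_icp[OF n] icz cyc_irr[OF n] degree_icp[OF n] by auto
  next
    fix p :: "int poly"
    assume P: "lead_coeff p = 1 \<and> poly (map_poly of_int p) (zeta n) = (0::complex) \<and>
      (\<forall>q::rat poly. q \<noteq> 0 \<and> poly (map_poly of_rat q) (zeta n) = (0::complex) \<longrightarrow> degree p \<le> degree q)"
    have "icp n \<noteq> 0" using monic_icp[OF n] by auto
    then have ic0: "(of_int_poly (icp n) :: rat poly) \<noteq> 0" by simp
    have "poly (map_poly of_rat (of_int_poly (icp n) :: rat poly)) (zeta n) = (0::complex)"
      using icz by (simp only: rc_of_int)
    then have d1: "degree p \<le> degree (icp n)" using P ic0 by auto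
    have "p \<noteq> 0" using P by auto
    then have p0: "(of_int_poly p :: rat poly) \<noteq> 0" by simp
    have "poly (map_poly of_rat (of_int_poly p :: rat poly)) (zeta n) = (0::complex)"
      using P by (simp only: rc_of_int)
    from cyc_irr[OF n p0 this] have d2: "degree (icp n) \<le> degree p" using degree_icp[OF n] by simp
    show "p = icp n"
    proof (rule ccontr)
      assume ne: "p \<noteq> icp n"
      have dlt: "degree (p - icp n) < degree p"
        by (rule monic_diff_degree) (use P monic_icp[OF n] d1 d2 ne in auto)
      have D0: "(of_int_poly (p - icp n) :: rat poly) \<noteq> 0" using ne by simp
      have "poly (map_poly of_rat (of_int_poly (p - icp n) :: rat poly)) (zeta n)
          = poly (of_int_poly (p - icp n) :: complex poly) (zeta n)" by (simp only: rc_of_int)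
      also have "\<dots> = 0" using P icz by (simp add: of_int_poly_hom.hom_minus)
      finally have "poly (map_poly of_rat (of_int_poly (p - icp n) :: rat poly)) (zeta n) = (0::complex)" .
      then have "degree p \<le> degree (of_int_poly (p - icp n) :: rat poly)" using P D0 by blast
      then have "degree p \<le> degree (p - icp n)" by (simp only: of_int_hom.degree_map_poly_hom)
      then show False using dlt by simp
    qed
  qed
qed

lemma degree_xn_c:
  assumes "n > 0" shows "degree (monom (1::'a::comm_ring_1) n - [:c:]) = n"
proof (rule antisym)
  show "degree (monom (1::'a) n - [:c:]) \<le> n" by (rule degree_diff_le) (auto simp: degree_monom_le)
  have "coeff (monom (1::'a) n - [:c:]) n = 1" using assms by (simp add: coeff_const)
  then show "n \<le> degree (monom (1::'a) n - [:c:])" by (intro le_degree) simp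
qed

lemma monic_xn_c: "n > 0 \<Longrightarrow> monic (monom (1::'a::comm_ring_1) n - [:c:])"
  by (simp add: degree_xn_c coeff_const)

lemma xn_c_prod:
  assumes "z \<noteq> 0" "p > 0"
  shows "monom 1 p - [:z:] = (\<Prod>y\<in>{y::complex. y ^ p = z}. [:-y,1:])"
proof (rule prod_roots_eq)
  show "monic (monom (1::complex) p - [:z:])" using assms(2) by (rule monic_xn_c)
  show "finite {y::complex. y ^ p = z}" using assms(2) by (rule finite_nth_roots)
  show "card {y::complex. y ^ p = z} = degree (monom (1::complex) p - [:z:])"
    using assms by (simp add: degree_xn_c card_nth_roots)
  show "poly (monom 1 p - [:z:]) y = 0" if "y \<in> {y::complex. y ^ p = z}" for y
    using that by (simp add: poly_monom)
qed

lemma lin_pcompose: "[:-z, 1:] \<circ>\<^sub>p (monom 1 p) = monom 1 p - [:z::complex:]"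
proof -
  have "[:-z, 1:] \<circ>\<^sub>p (monom 1 p) = [:-z:] + monom 1 p" by (simp add: pcompose_pCons)
  also have "[:-z:] = - [:z:]" by simp
  finally show ?thesis by simp
qed

lemma prim_nonzero: assumes "z \<in> prim m" "m > 0" shows "z \<noteq> 0"
proof
  assume z: "z = 0"
  have "z ^ m = 1" using assms(1) prim_sub by auto
  then show False using z assms(2) by (simp add: power_0_left)
qed

lemma cp_pcompose_roots:
  assumes m: "m > 0" and p: "p > 0"
  shows "cp m \<circ>\<^sub>p (monom 1 p) = (\<Prod>y\<in>{y. y ^ p \<in> prim m}. [:-y,1:])"
proof -
  have "cp m \<circ>\<^sub>p (monom 1 p) = (\<Prod>z\<in>prim m. monom 1 p - [:z:])"
    unfolding cp_def by (simp only: pcompose_prod lin_pcompose)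
  also have "\<dots> = (\<Prod>z\<in>prim m. \<Prod>y\<in>{y::complex. y ^ p = z}. [:-y,1:])"
    by (rule prod.cong[OF refl], rule xn_c_prod[OF prim_nonzero[OF _ m] p])
  also have "\<dots> = (\<Prod>y\<in>(\<Union>z\<in>prim m. {y::complex. y ^ p = z}). [:-y,1:])"
  proof (rule prod.UNION_disjoint[symmetric])
    show "finite (prim m)" by (rule finite_prim[OF m])
    show "\<forall>i\<in>prim m. finite {y::complex. y ^ p = i}" using p by (auto intro: finite_nth_roots)
    show "\<forall>i\<in>prim m. \<forall>j\<in>prim m. i \<noteq> j \<longrightarrow> {y::complex. y ^ p = i} \<inter> {y. y ^ p = j} = {}" by auto
  qed
  also have "(\<Union>z\<in>prim m. {y::complex. y ^ p = z}) = {y. y ^ p \<in> prim m}" by auto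
  finally show ?thesis .
qed

lemma pow_gcd_one:
  fixes x :: complex
  assumes "x ^ a = 1" "x ^ b = 1" "a \<noteq> 0"
  shows "x ^ gcd a b = 1"
proof -
  obtain u v where uv: "a * u = b * v + gcd a b" using bezout_nat[OF assms(3)] by blast
  have "1 = x ^ (a * u)" using assms(1) by (simp add: power_mult)
  also have "\<dots> = (x ^ b) ^ v * x ^ gcd a b" unfolding uv by (simp add: power_add power_mult)
  finally show ?thesis using assms(2) by simp
qed

lemma prim_pow_set:
  assumes p: "prime p" and m: "m > 0"
  shows "{y. y ^ p \<in> prim m} = prim (p * m) \<union> (if p dvd m then {} else prim m)"
proof -
  have p1: "p > 1" using p prime_gt_1_nat by blast
  show ?thesis
proof (intro equalityI subsetI)
  fix y assume "y \<in> {y. y ^ p \<in> prim m}"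
  then have yp: "y ^ p \<in> prim m" by simp
  have A: "(y ^ p) ^ k = 1 \<longleftrightarrow> m dvd k" for k using prim_iff[OF yp] .
  show "y \<in> prim (p * m) \<union> (if p dvd m then {} else prim m)"
  proof (cases "y ^ m = 1")
    case True
    have "y \<in> prim m" unfolding prim_def
    proof (safe)
      show "y ^ m = 1" by (rule True)
      fix k assume "y ^ k = 1"
      then have "(y ^ p) ^ k = 1" by (simp add: power_mult[symmetric] mult.commute power_mult)
      then show "m dvd k" using A by simp
    qed
    moreover have "\<not> p dvd m"
    proof
      assume "p dvd m"
      then obtain t where t: "m = p * t" by (elim dvdE)
      have t0: "t > 0" using m t by (simp add: Nat.gr0I)
      have "(y ^ p) ^ t = 1" using True t by (simp add: power_mult)
      then have "m dvd t" using A by simp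
      then have "m \<le> t" using t0 by (simp add: dvd_imp_le)
      moreover have "t < m" using t p1 t0 by simp
      ultimately show False by simp
    qed
    ultimately show ?thesis by simp
  next
    case False
    have "y \<in> prim (p * m)" unfolding prim_def
    proof (safe)
      show "y ^ (p * m) = 1" using A[of m] by (simp add: power_mult)
      fix k assume yk: "y ^ k = 1"
      then have "(y ^ p) ^ k = 1" by (simp add: power_mult[symmetric] mult.commute power_mult)
      then have "m dvd k" using A by simp
      then obtain c where c: "k = m * c" by (elim dvdE)
      show "p * m dvd k"
      proof (cases "c = 0")
        case True then show ?thesis using c by simp
      next
        case False
        have "p dvd c"
        proof (rule ccontr)
          assume "\<not> p dvd c"
          then have g: "gcd c p = 1"
            using p by (metis gcd.commute prime_nat_iff gcd_dvd1 gcd_dvd2)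
          have "(y ^ m) ^ c = 1" using yk c by (simp add: power_mult)
          moreover have "(y ^ m) ^ p = 1" using A[of m] by (simp add: power_mult[symmetric] mult.commute)
          ultimately have "(y ^ m) ^ gcd c p = 1" using False by (intro pow_gcd_one)
          then show False using g \<open>y ^ m \<noteq> 1\<close> by simp
        qed
        then show ?thesis using c by (auto intro: mult_dvd_mono)
      qed
    qed
    then show ?thesis by simp
  qed
next
  fix y assume y: "y \<in> prim (p * m) \<union> (if p dvd m then {} else prim m)"
  show "y \<in> {y. y ^ p \<in> prim m}"
  proof (cases "y \<in> prim (p * m)")
    case True
    have "y ^ p \<in> prim m" unfolding prim_def
    proof (safe)
      show "(y ^ p) ^ m = 1" using True prim_iff[OF True, of "p * m"] by (simp add: power_mult)
      fix k assume "(y ^ p) ^ k = 1"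
      then have "y ^ (p * k) = 1" by (simp add: power_mult)
      then have "p * m dvd p * k" using prim_iff[OF True] by simp
      then show "m dvd k" using p1 by simp
    qed
    then show ?thesis by simp
  next
    case False
    then have ym: "y \<in> prim m" and np: "\<not> p dvd m" using y by (auto split: if_splits)
    have "y ^ p \<in> prim m" unfolding prim_def
    proof (safe)
      show "(y ^ p) ^ m = 1" using prim_iff[OF ym, of m] by (simp add: power_mult[symmetric] mult.commute power_mult)
      fix k assume "(y ^ p) ^ k = 1"
      then have "y ^ (p * k) = 1" by (simp add: power_mult)
      then have "m dvd p * k" using prim_iff[OF ym] by simp
      moreover have "gcd m p = 1" using np p by (metis gcd.commute prime_nat_iff gcd_dvd1 gcd_dvd2 gcd_dvd1)
      ultimately show "m dvd k" by (metis gcd.commute coprime_dvd_mult_right_iff gcd_eq_1_imp_coprime)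
    qed
    then show ?thesis by simp
  qed
qed
qed

lemma cp_pcompose_ndvd:
  assumes p: "prime p" and m: "m > 0" and nd: "\<not> p dvd m"
  shows "cp m \<circ>\<^sub>p (monom 1 p) = cp (p * m) * cp m"
proof -
  have p0: "p > 0" using p prime_gt_0_nat by blast
  have p1: "p > 1" using p prime_gt_1_nat by blast
  have "cp m \<circ>\<^sub>p (monom 1 p) = (\<Prod>y\<in>prim (p * m) \<union> prim m. [:-y,1:])"
    using cp_pcompose_roots[OF m p0] prim_pow_set[OF p m] nd by simp
  also have "\<dots> = cp (p * m) * cp m" unfolding cp_def
  proof (rule prod.union_disjoint)
    show "finite (prim (p * m))" using m p0 by (intro finite_prim) simp
    show "finite (prim m)" using m by (rule finite_prim)
    show "prim (p * m) \<inter> prim m = {}"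
    proof (rule ccontr)
      assume "prim (p * m) \<inter> prim m \<noteq> {}"
      then obtain y where "y \<in> prim (p * m)" "y \<in> prim m" by blast
      then have "p * m = m" by (rule prim_unique)
      then show False using p1 m by simp
    qed
  qed
  finally show ?thesis .
qed

lemma cp_pcompose_dvd:
  assumes p: "prime p" and m: "m > 0" and d: "p dvd m"
  shows "cp m \<circ>\<^sub>p (monom 1 p) = cp (p * m)"
proof -
  have p0: "p > 0" using p prime_gt_0_nat by blast
  show ?thesis using cp_pcompose_roots[OF m p0] prim_pow_set[OF p m] d unfolding cp_def by simp
qed

lemma prim_1: "prim 1 = {1}"
  unfolding prim_def by auto

lemma cp_1: "cp 1 = [:-1, 1:]"
  unfolding cp_def prim_1 by simp

definition modx :: "nat \<Rightarrow> complex poly \<Rightarrow> complex poly \<Rightarrow> bool" where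
  "modx K a b \<longleftrightarrow> monom 1 K dvd (a - b)"

lemma modx_refl: "modx K a a" unfolding modx_def by simp

lemma modx_sym: "modx K a b \<Longrightarrow> modx K b a"
  unfolding modx_def by (metis dvd_minus_iff minus_diff_eq)

lemma modx_trans: "modx K a b \<Longrightarrow> modx K b c \<Longrightarrow> modx K a c"
  unfolding modx_def
proof -
  assume "monom 1 K dvd a - b" "monom 1 K dvd b - c"
  then have "monom 1 K dvd (a - b) + (b - c)" by (rule dvd_add)
  then show "monom 1 K dvd a - c" by simp
qed

lemma modx_mult_right: "modx K a b \<Longrightarrow> modx K (a * c) (b * c)"
  unfolding modx_def
proof -
  assume "monom 1 K dvd a - b"
  then have "monom 1 K dvd (a - b) * c" by simp
  then show "monom 1 K dvd a * c - b * c" by (simp add: algebra_simps)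
qed

lemma modx_mult_left: "modx K a b \<Longrightarrow> modx K (c * a) (c * b)"
  using modx_mult_right[of K a b c] by (simp add: mult.commute)

lemma modx_mono: "modx K a b \<Longrightarrow> K' \<le> K \<Longrightarrow> modx K' a b"
  unfolding modx_def
proof -
  assume a: "monom 1 K dvd a - b" and k: "K' \<le> K"
  have "monom (1::complex) K = monom 1 K' * monom 1 (K - K')" using k by (simp add: mult_monom)
  then have "monom 1 K' dvd (monom (1::complex) K)" by simp
  then show "monom 1 K' dvd a - b" using a by (rule dvd_trans)
qed

lemma modx_coeff0: "modx K a b \<Longrightarrow> K > 0 \<Longrightarrow> coeff a 0 = coeff b 0"
  unfolding modx_def monom_1_dvd_iff' by auto

lemma modx_pcomp_const:
  assumes "p > 0"
  shows "modx p (a \<circ>\<^sub>p (monom 1 p)) [:coeff a 0:]"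
proof -
  obtain c a' where a: "a = pCons c a'" by (cases a) auto
  have "a \<circ>\<^sub>p (monom 1 p) - [:coeff a 0:] = monom 1 p * (a' \<circ>\<^sub>p (monom 1 p))"
    unfolding a by (simp add: pcompose_pCons)
  then show ?thesis unfolding modx_def by simp
qed

lemma modx_pcomp:
  assumes "modx K a b"
  shows "modx (K * t) (a \<circ>\<^sub>p (monom 1 t)) (b \<circ>\<^sub>p (monom 1 t))"
proof -
  obtain w where w: "a - b = monom 1 K * w" using assms unfolding modx_def by (elim dvdE)
  have "a \<circ>\<^sub>p (monom 1 t) - b \<circ>\<^sub>p (monom 1 t) = (a - b) \<circ>\<^sub>p (monom 1 t)"
    by (simp add: pcompose_diff)
  also have "\<dots> = (monom 1 K \<circ>\<^sub>p monom 1 t) * (w \<circ>\<^sub>p monom 1 t)" unfolding w by (simp add: pcompose_mult)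
  also have "monom 1 K \<circ>\<^sub>p monom (1::complex) t = monom 1 (t * K)" by (rule monom_pcompose_monom)
  finally show ?thesis unfolding modx_def by (simp add: mult.commute)
qed

lemma inv_trunc:
  assumes "c * c = 1"
  shows "modx (2 * k) ((1 - smult c (monom 1 k)) * (1 + smult c (monom 1 k))) 1"
proof -
  have "(1 - smult c (monom 1 k)) * (1 + smult c (monom 1 k)) - 1 = - smult (c * c) (monom 1 k * monom 1 k)"
    by (simp add: algebra_simps)
  also have "monom 1 k * monom (1::complex) k = monom 1 (2 * k)" by (simp add: mult_monom mult_2)
  finally show ?thesis unfolding modx_def using assms by simp
qed

lemma modx_G:
  assumes AB: "modx K (A * B) [:e:]" and B: "modx K B (smult e (1 - smult s (monom 1 k)))"
    and inv: "modx K ((1 - smult s (monom 1 k)) * (1 + smult s (monom 1 k))) 1"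
    and e: "e * e = 1"
  shows "modx K A (1 + smult s (monom 1 k))"
proof -
  define Y where "Y = 1 + smult s (monom 1 k)"
  define Z where "Z = 1 - smult s (monom (1::complex) k)"
  have "modx K (A * B * Y) ([:e:] * Y)" using AB by (rule modx_mult_right)
  moreover have "modx K (A * B * Y) (A * (smult e Z * Y))"
    using modx_mult_left[OF modx_mult_right[OF B[folded Z_def], of Y], of A] by (simp add: mult.assoc)
  moreover have "modx K (A * (smult e Z * Y)) (A * [:e:])"
  proof -
    have "modx K (Z * Y) 1" using inv unfolding Z_def Y_def .
    then have "modx K ([:e:] * (Z * Y)) ([:e:] * 1)" by (rule modx_mult_left)
    then have "modx K (A * ([:e:] * (Z * Y))) (A * [:e:])" using modx_mult_left by fastforce
    moreover have "smult e Z * Y = [:e:] * (Z * Y)" by simp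
    ultimately show ?thesis by simp
  qed
  ultimately have "modx K (A * [:e:]) ([:e:] * Y)" by (meson modx_sym modx_trans)
  then have "modx K (A * [:e:] * [:e:]) ([:e:] * Y * [:e:])" by (rule modx_mult_right)
  moreover have "A * [:e:] * [:e:] = A" using e by (simp add: mult.assoc)
  moreover have "[:e:] * Y * [:e:] = Y" using e by (simp add: mult.assoc mult.commute[of _ Y])
  ultimately show ?thesis unfolding Y_def by simp
qed

lemma L1_step:
  assumes q: "prime q" and R: "R > 0" and nd: "\<not> q dvd R"
    and h: "modx 2 (cp R) (smult e (1 - smult s (monom 1 1)))" and e: "e * e = 1" and s: "s * s = 1"
  shows "modx 2 (cp (q * R)) (1 + smult s (monom 1 1))"
proof -
  have q2: "q \<ge> 2" using q prime_ge_2_nat by blast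
  have D: "cp R \<circ>\<^sub>p monom 1 q = cp (q * R) * cp R" by (rule cp_pcompose_ndvd[OF q R nd])
  have c0: "coeff (cp R) 0 = e" using modx_coeff0[OF h] by simp
  have "modx q (cp R \<circ>\<^sub>p monom 1 q) [:e:]" using modx_pcomp_const[of q "cp R"] q2 c0 by simp
  then have AB: "modx 2 (cp (q*R) * cp R) [:e:]" using D modx_mono q2 by auto
  have inv: "modx 2 ((1 - smult s (monom 1 1)) * (1 + smult s (monom 1 1))) 1"
    using inv_trunc[OF s, of 1] by simp
  show ?thesis by (rule modx_G[OF AB h inv e])
qed

lemma sq1_cases: "s * s = (1::complex) \<Longrightarrow> t * t = 1 \<Longrightarrow> t \<noteq> s \<Longrightarrow> t = - s"
proof -
  assume a: "s * s = 1" "t * t = 1" "t \<noteq> s"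
  have "(t - s) * (t + s) = 0" using a by (simp add: algebra_simps)
  then show "t = - s" using a(3) by (simp add: eq_neg_iff_add_eq_0)
qed

lemma L1:
  assumes "finite S" "\<forall>q\<in>S. prime q"
  shows "\<exists>e s. e * e = 1 \<and> s * s = (1::complex) \<and> modx 2 (cp (\<Prod>S)) (smult e (1 - smult s (monom 1 1)))"
  using assms
proof (induction S rule: finite_induct)
  case empty
  have e1: "cp (\<Prod>{}) = [:-1,1:]" by (simp only: prod.empty cp_1)
  have e2: "[:-1,1:] = smult (-1) (1 - smult 1 (monom (1::complex) 1))"
    by (rule poly_eqI) (auto simp: coeff_pCons coeff_monom split: nat.split)
  have "cp (\<Prod>{}) = smult (-1) (1 - smult 1 (monom 1 1))" using e1 e2 by simp
  then show ?case using modx_refl by (metis mult_minus1 mult_1 minus_minus)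
next
  case (insert q S)
  obtain e s where es: "e * e = 1" "s * s = (1::complex)" "modx 2 (cp (\<Prod>S)) (smult e (1 - smult s (monom 1 1)))"
    using insert by auto
  have q: "prime q" using insert.prems by simp
  have P0: "\<Prod>S > 0" using insert.prems insert.hyps(1) by (intro prod_pos) (auto simp: prime_gt_0_nat)
  have nd: "\<not> q dvd \<Prod>S"
  proof
    assume "q dvd \<Prod>S"
    then obtain q' where "q' \<in> S" "q dvd q'" using prime_dvd_prod_iff[OF insert.hyps(1) q, of "\<lambda>x. x"] by auto
    then have "q = q'" using insert.prems q by (intro primes_dvd_imp_eq) auto
    then show False using \<open>q' \<in> S\<close> insert.hyps(2) by simp
  qed
  have "modx 2 (cp (q * \<Prod>S)) (1 + smult s (monom 1 1))" by (rule L1_step[OF q P0 nd es(3) es(1) es(2)])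
  moreover have "\<Prod>(insert q S) = q * \<Prod>S" using insert.hyps by simp
  moreover have "(1 + smult s (monom 1 1)) = smult 1 (1 - smult (-s) (monom (1::complex) 1))" by simp
  ultimately show ?case using es(2) by (metis mult_1 mult_minus_left mult_minus_right minus_minus)
qed

lemma L2:
  assumes R: "R > 0" and t: "t > 0" and primes: "\<forall>q. prime q \<and> q dvd t \<longrightarrow> q dvd R"
  shows "cp (R * t) = cp R \<circ>\<^sub>p monom 1 t"
  using t primes
proof (induction t rule: less_induct)
  case (less t)
  show ?case
  proof (cases "t = 1")
    case True
    have x: "monom (1::complex) 1 = [:0,1:]" by (rule x_as_monom[symmetric])
    show ?thesis unfolding True by (simp only: mult_1_right x pcompose_idR)
  next
    case False
    obtain q where q: "prime q" "q dvd t" using prime_factor_nat[OF False] by blast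
    then obtain t' where t': "t = q * t'" by (elim dvdE)
    have q1: "q > 1" using q(1) prime_gt_1_nat by blast
    have t'0: "t' > 0" using less.prems(1) t' by (simp add: Nat.gr0I)
    have "t' < t" using t' q1 t'0 by simp
    moreover have "\<forall>q'. prime q' \<and> q' dvd t' \<longrightarrow> q' dvd R" using less.prems(2) t' by auto
    ultimately have IH: "cp (R * t') = cp R \<circ>\<^sub>p monom 1 t'" using less.IH t'0 by blast
    have "q dvd R" using less.prems(2) q by blast
    then have qd: "q dvd R * t'" by simp
    have "R * t' > 0" using R t'0 by simp
    then have "cp (R * t') \<circ>\<^sub>p monom 1 q = cp (q * (R * t'))"
      using cp_pcompose_dvd[OF q(1) _ qd] by blast
    moreover have "cp (R * t') \<circ>\<^sub>p monom 1 q = cp R \<circ>\<^sub>p monom 1 (q * t')"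
      unfolding IH by (simp add: pcompose_assoc[symmetric] monom_pcompose_monom)
    ultimately show ?thesis using t' by (simp add: mult.left_commute)
  qed
qed

lemma construct:
  assumes d: "d > 0" and s: "s * s = (1::complex)"
  shows "\<exists>m>0. \<forall>p. prime p \<and> 2 * d \<le> p \<and> \<not> p dvd m \<longrightarrow>
           modx (2 * d) (cp (p * m)) (1 + smult s (monom 1 d))"
proof -
  define S0 where "S0 = {q. prime q \<and> q dvd d}"
  have "S0 \<subseteq> {..d}"
  proof
    fix q assume "q \<in> S0"
    then have "q dvd d" unfolding S0_def by simp
    then have "q \<le> d" using d by (rule dvd_imp_le)
    then show "q \<in> {..d}" by simp
  qed
  then have finS0: "finite S0" by (rule finite_subset) simp
  have pS0: "\<forall>q\<in>S0. prime q" unfolding S0_def by simp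
  define R0 where "R0 = \<Prod>S0"
  have R00: "R0 > 0" unfolding R0_def using finS0 pS0 by (intro prod_pos) (auto simp: prime_gt_0_nat)
  from L1[OF finS0 pS0] obtain e0 s0 where h0': "e0 * e0 = 1" "s0 * s0 = (1::complex)"
    "modx 2 (cp (\<Prod>S0)) (smult e0 (1 - smult s0 (monom 1 1)))" by (elim exE conjE)
  then have h0: "e0 * e0 = 1" "s0 * s0 = (1::complex)"
    "modx 2 (cp R0) (smult e0 (1 - smult s0 (monom 1 1)))" unfolding R0_def by auto
  have "\<exists>R e. R > 0 \<and> R0 dvd R \<and> e * e = (1::complex) \<and> modx 2 (cp R) (smult e (1 - smult s (monom 1 1)))"
  proof (cases "s0 = s")
    case True
    then show ?thesis using h0 R00 by (intro exI[of _ R0] exI[of _ e0]) auto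
  next
    case False
    then have ss: "s0 = - s" using sq1_cases[OF s h0(2)] by simp
    obtain q0 where q0: "prime q0" "R0 < q0" using bigger_prime by blast
    have nd: "\<not> q0 dvd R0"
    proof
      assume "q0 dvd R0"
      then have "q0 \<le> R0" using R00 by (rule dvd_imp_le)
      then show False using q0(2) by simp
    qed
    have "modx 2 (cp (q0 * R0)) (1 + smult s0 (monom 1 1))"
      by (rule L1_step[OF q0(1) R00 nd h0(3) h0(1) h0(2)])
    moreover have "(1 + smult s0 (monom 1 1)) = smult 1 (1 - smult s (monom (1::complex) 1))" using ss by simp
    ultimately have "modx 2 (cp (q0 * R0)) (smult 1 (1 - smult s (monom 1 1)))" by simp
    moreover have "q0 * R0 > 0" using R00 q0(1) prime_gt_0_nat by simp
    ultimately show ?thesis by (intro exI[of _ "q0 * R0"] exI[of _ 1]) auto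
  qed
  then obtain R e where Re: "R > 0" "R0 dvd R" "e * e = (1::complex)"
    "modx 2 (cp R) (smult e (1 - smult s (monom 1 1)))" by blast
  define m where "m = R * d"
  have m0: "m > 0" unfolding m_def using Re(1) d by simp
  have primes: "\<forall>q. prime q \<and> q dvd d \<longrightarrow> q dvd R"
  proof (intro allI impI)
    fix q assume "prime q \<and> q dvd d"
    then have "q \<in> S0" unfolding S0_def by simp
    then have "q dvd R0" unfolding R0_def using finS0 by (intro dvd_prodI) auto
    then show "q dvd R" using Re(2) by (rule dvd_trans)
  qed
  have cpm: "cp m = cp R \<circ>\<^sub>p monom 1 d" unfolding m_def by (rule L2[OF Re(1) d primes])
  have "modx (2 * d) (cp R \<circ>\<^sub>p monom 1 d) (smult e (1 - smult s (monom 1 1)) \<circ>\<^sub>p monom 1 d)"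
    by (rule modx_pcomp[OF Re(4)])
  moreover have "smult e (1 - smult s (monom 1 1)) \<circ>\<^sub>p monom 1 d = smult e (1 - smult s (monom (1::complex) d))"
    by (simp add: pcompose_smult pcompose_diff monom_pcompose_monom)
  ultimately have Bm: "modx (2 * d) (cp m) (smult e (1 - smult s (monom 1 d)))" unfolding cpm by simp
  have c0: "coeff (cp m) 0 = e" using modx_coeff0[OF Bm] d by simp
  have "modx (2 * d) (cp (p * m)) (1 + smult s (monom 1 d))"
    if p: "prime p" "2 * d \<le> p" "\<not> p dvd m" for p
  proof -
    have D: "cp m \<circ>\<^sub>p monom 1 p = cp (p * m) * cp m" by (rule cp_pcompose_ndvd[OF p(1) m0 p(3)])
    have "p > 0" using p(1) prime_gt_0_nat by blast
    then have "modx p (cp m \<circ>\<^sub>p monom 1 p) [:e:]" using modx_pcomp_const[of p "cp m"] c0 by simp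
    then have AB: "modx (2 * d) (cp (p * m) * cp m) [:e:]" using D modx_mono p(2) by auto
    show ?thesis by (rule modx_G[OF AB Bm inv_trunc[OF s] Re(3)])
  qed
  then show ?thesis using m0 by blast
qed

lemma int_xn1: "of_int_poly (monom 1 n - 1 :: int poly) = (monom 1 n - 1 :: complex poly)"
  by (simp only: of_int_poly_hom.hom_minus of_int_poly_monom of_int_poly_hom.hom_one)

lemma icp_prod:
  assumes m: "m > 0" and A: "A \<subseteq> {e. e dvd m}"
  shows "of_int_poly (\<Prod>e\<in>A. icp e) = (\<Prod>e\<in>A. cp e)"
proof -
  have "\<forall>e\<in>A. e > 0" using A m by (auto intro: Nat.gr0I)
  then show ?thesis by (simp add: of_int_poly_hom.hom_prod icp)
qed

lemma xn1_icp:
  assumes m: "m > 0"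
  shows "(monom 1 m - 1 :: int poly) = (\<Prod>e\<in>{e. e dvd m}. icp e)"
proof -
  have "of_int_poly (monom 1 m - 1 :: int poly) = (of_int_poly (\<Prod>e\<in>{e. e dvd m}. icp e) :: complex poly)"
    unfolding int_xn1 icp_prod[OF m subset_refl] by (rule xn1_cp[OF m])
  then show ?thesis by (rule of_int_poly_hom.injectivity)
qed

lemma dvd_poly_minus_const: "(x::int) dvd poly f x - coeff f 0"
proof (cases f)
  case (pCons a g)
  then show ?thesis by simp
qed

lemma icp_coeff0_unit:
  assumes m: "m > 0"
  shows "coeff (icp m) 0 dvd 1"
proof -
  have "poly (monom 1 m - 1 :: int poly) 0 = -1" using m by (simp add: poly_monom power_0_left)
  then have "(\<Prod>e\<in>{e. e dvd m}. poly (icp e) 0) = -1" unfolding xn1_icp[OF m] poly_prod .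
  moreover have "poly (icp m) 0 dvd (\<Prod>e\<in>{e. e dvd m}. poly (icp e) 0)"
    by (rule dvd_prodI) (use m in auto)
  moreover have "poly (icp m) 0 = coeff (icp m) 0" by (rule poly_0_coeff_0)
  ultimately show ?thesis by simp
qed

lemma cp_eval_large:
  assumes m: "m > 0" and a: "a \<ge> 3"
  shows "\<bar>poly (icp m) (int a)\<bar> \<ge> 2"
proof -
  have "complex_of_int (poly (icp m) (int a)) = poly (of_int_poly (icp m)) (of_nat a)"
    by (metis of_int_hom.poly_map_poly of_int_of_nat_eq)
  also have "\<dots> = poly (cp m) (of_nat a)" using icp[OF m] by simp
  also have "\<dots> = (\<Prod>z\<in>prim m. of_nat a - z)" unfolding cp_def poly_prod by simp
  finally have eq: "complex_of_int (poly (icp m) (int a)) = (\<Prod>z\<in>prim m. of_nat a - z)" .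
  have ge: "norm (of_nat a - z) \<ge> 2" if z: "z \<in> prim m" for z :: complex
  proof -
    have "z ^ m = 1" using z prim_sub by auto
    then have "norm z ^ m = 1" by (metis norm_one norm_power)
    then have nz: "norm z = 1" using m power_eq_imp_eq_base[of "norm z" m 1] by simp
    have "norm (of_nat a :: complex) - norm z \<le> norm (of_nat a - z)" by (rule norm_triangle_ineq2)
    then show ?thesis using nz a by simp
  qed
  have "prim m \<noteq> {}" using zeta_prim[OF m] by auto
  then have "(2::real) \<le> 2 ^ card (prim m)" using finite_prim[OF m]
    by (metis card_0_eq one_le_power le_add_same_cancel1 self_le_power zero_less_numeral one_le_numeral neq0_conv power_one_right)
  also have "\<dots> = (\<Prod>z\<in>prim m. (2::real))" by simp
  also have "\<dots> \<le> (\<Prod>z\<in>prim m. norm (of_nat a - z))" by (rule prod_mono) (use ge in auto)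
  also have "\<dots> = norm (\<Prod>z\<in>prim m. of_nat a - z)" by (simp add: prod_norm)
  also have "\<dots> = norm (complex_of_int (poly (icp m) (int a)))" unfolding eq ..
  also have "\<dots> = real_of_int \<bar>poly (icp m) (int a)\<bar>" by (simp only: norm_of_int)
  finally show ?thesis by simp
qed

lemma icp_split:
  assumes m: "m > 0" and e: "e dvd m" "e \<noteq> m"
  shows "\<exists>W. (monom 1 m - 1 :: int poly) = icp m * (monom 1 e - 1) * W"
proof -
  have e0: "e > 0" using e m by (auto intro: Nat.gr0I)
  have em: "e < m" using e m dvd_imp_le by (metis le_neq_implies_less)
  define A where "A = {e'. e' dvd m} - {m} - {e'. e' dvd e}"
  have finD: "finite {e'. e' dvd m}" using m by simp
  have fin1: "finite {e'. e' dvd e}" using e0 by simp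
  have finA: "finite A" unfolding A_def using finD by simp
  have sub: "{e'. e' dvd e} \<subseteq> {e'. e' dvd m}" using e(1) by (auto intro: dvd_trans)
  have mnot: "m \<notin> {e'. e' dvd e} \<union> A"
  proof
    assume "m \<in> {e'. e' dvd e} \<union> A"
    then have "m dvd e" unfolding A_def by auto
    then have "m \<le> e" using e0 by (rule dvd_imp_le)
    then show False using em by simp
  qed
  have split: "{e'. e' dvd m} = insert m ({e'. e' dvd e} \<union> A)" unfolding A_def using sub by auto
  have disj: "{e'. e' dvd e} \<inter> A = {}" unfolding A_def by auto
  have "(\<Prod>e'\<in>{e'. e' dvd m}. icp e') = icp m * ((\<Prod>e'\<in>{e'. e' dvd e}. icp e') * (\<Prod>e'\<in>A. icp e'))"
    unfolding split using mnot fin1 finA disj by (simp add: prod.union_disjoint)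
  then have "(monom 1 m - 1 :: int poly) = icp m * (monom 1 e - 1) * (\<Prod>e'\<in>A. icp e')"
    unfolding xn1_icp[OF m, symmetric] xn1_icp[OF e0, symmetric] by (simp add: mult.assoc)
  then show ?thesis by blast
qed

lemma primes_1_mod:
  fixes N m :: nat
  assumes m: "m > 0"
  shows "\<exists>q. prime q \<and> N < q \<and> m dvd q - 1"
proof -
  define a where "a = m * fact (N + 3)"
  have "N + 3 \<le> fact (N + 3)" by (rule fact_ge_self)
  then have f3: "fact (N + 3) \<ge> (3::nat)" by linarith
  have h: "1 * fact (N + 3) \<le> m * (fact (N + 3) :: nat)" by (rule mult_le_mono1) (use m in simp)
  have "fact (N + 3) \<le> a" using h unfolding a_def by (simp only: mult_1)
  then have a3: "a \<ge> 3" using f3 by linarith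
  define v where "v = poly (icp m) (int a)"
  have v2: "\<bar>v\<bar> \<ge> 2" unfolding v_def by (rule cp_eval_large[OF m a3])
  define c where "c = coeff (icp m) 0"
  have cu: "c dvd 1" unfolding c_def by (rule icp_coeff0_unit[OF m])
  have av: "int a dvd v - c" unfolding v_def c_def by (rule dvd_poly_minus_const)
  have "nat \<bar>v\<bar> \<noteq> 1" using v2 by simp
  then obtain q where q: "prime q" "q dvd nat \<bar>v\<bar>" using prime_factor_nat by blast
  have "int q dvd int (nat \<bar>v\<bar>)" using q(2) by (simp only: int_dvd_int_iff)
  then have qv: "int q dvd v" using v2 by simp
  have q1: "q > 1" using q(1) prime_gt_1_nat by blast
  have qa: "\<not> q dvd a"
  proof
    assume "q dvd a"
    then have "int q dvd int a" by simp
    then have "int q dvd v - c" using av by (rule dvd_trans)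
    with qv have "int q dvd v - (v - c)" by (rule dvd_diff)
    then have "int q dvd c" by simp
    then have "int q dvd 1" using cu by (rule dvd_trans)
    then show False using q1 by simp
  qed
  have qN: "N < q"
  proof (rule ccontr)
    assume "\<not> N < q"
    then have "q \<le> N + 3" by simp
    then have "q dvd fact (N + 3)" using q1 by (intro dvd_fact) auto
    then have "q dvd a" unfolding a_def by simp
    then show False using qa by simp
  qed
  have qm: "\<not> q dvd m"
  proof
    assume "q dvd m" then have "q dvd a" unfolding a_def by simp
    then show False using qa by simp
  qed
  have "icp m dvd (monom 1 m - 1 :: int poly)" unfolding xn1_icp[OF m] by (rule dvd_prodI) (use m in auto)
  then have "v dvd poly (monom 1 m - 1 :: int poly) (int a)" unfolding v_def by (rule poly_hom.hom_dvd)
  then have "v dvd int a ^ m - 1" by (simp add: poly_monom)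
  then have "int q dvd int a ^ m - 1" by (rule dvd_trans[OF qv])
  then have "[int a ^ m = 1] (mod int q)" by (simp add: cong_iff_dvd_diff)
  then have "[int (a ^ m) = int 1] (mod int q)" by simp
  then have am: "[a ^ m = 1] (mod q)" by (simp only: cong_int_iff)
  define e where "e = ord q a"
  have em: "e dvd m" using am unfolding e_def by (simp only: ord_divides)
  have "[a ^ (q - 1) = 1] (mod q)" by (rule fermat_theorem[OF q(1) qa])
  then have eq1: "e dvd q - 1" unfolding e_def by (simp only: ord_divides)
  show ?thesis
  proof (cases "e = m")
    case True
    then show ?thesis using q(1) qN eq1 by blast
  next
    case False
    have e0: "e > 0" using em m by (auto intro: Nat.gr0I)
    obtain W where W: "(monom 1 m - 1 :: int poly) = icp m * (monom 1 e - 1) * W"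
      using icp_split[OF m em False] by blast
    define x where "x = int a ^ e"
    define k where "k = m div e"
    have mk: "m = e * k" unfolding k_def using em by simp
    have E1: "int a ^ m - 1 = v * (x - 1) * poly W (int a)"
      using arg_cong[OF W, of "\<lambda>f. poly f (int a)"] unfolding v_def x_def by (simp add: poly_monom)
    have E2: "int a ^ m - 1 = (x - 1) * (\<Sum>i<k. x ^ i)"
      unfolding x_def mk by (simp add: power_mult power_diff_1_eq)
    have x0: "x - 1 \<noteq> 0"
    proof -
      have "a ^ e \<ge> a ^ 1" using a3 e0 by (intro power_increasing) auto
      then have "a ^ e \<ge> 3" using a3 by simp
      then have "int (a ^ e) \<ge> int 3" by (simp only: of_nat_le_iff)
      then have "int a ^ e \<ge> 3" by simp
      then show ?thesis unfolding x_def by simp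
    qed
    have "(x - 1) * (\<Sum>i<k. x ^ i) = (x - 1) * (v * poly W (int a))"
      using E1 E2 by (simp add: algebra_simps)
    then have G: "(\<Sum>i<k. x ^ i) = v * poly W (int a)" using x0 by simp
    then have qG: "int q dvd (\<Sum>i<k. x ^ i)" using qv by simp
    have "[a ^ e = 1] (mod q)" unfolding e_def by (simp only: ord_divides dvd_refl)
    then have "[int (a ^ e) = int 1] (mod int q)" by (simp only: cong_int_iff)
    then have x1: "[x = 1] (mod int q)" unfolding x_def by simp
    have "[(\<Sum>i<k. x ^ i) = (\<Sum>i<k. 1)] (mod int q)"
    proof (rule cong_sum)
      fix i assume "i \<in> {..<k}"
      have "[x ^ i = 1 ^ i] (mod int q)" using x1 by (rule cong_pow)
      then show "[x ^ i = 1] (mod int q)" by simp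
    qed
    then have c1: "[(\<Sum>i<k. x ^ i) = int k] (mod int q)" by simp
    have c2: "[(\<Sum>i<k. x ^ i) = 0] (mod int q)" using qG by (simp add: cong_0_iff)
    have "[int k = 0] (mod int q)" using cong_trans[OF cong_sym[OF c1] c2] .
    then have "int q dvd int k" by (simp add: cong_0_iff)
    then have "q dvd k" by (simp only: int_dvd_int_iff)
    moreover have "k dvd m" using mk by simp
    ultimately have "q dvd m" by (rule dvd_trans)
    then show ?thesis using qm by simp
  qed
qed

lemma modx_to_int:
  assumes "modx K (of_int_poly A) (of_int_poly B)"
  shows "monom 1 K dvd (A - B)"
proof -
  have "monom 1 K dvd (of_int_poly (A - B) :: complex poly)"
    using assms unfolding modx_def by (simp add: of_int_poly_hom.hom_minus)
  then have "\<forall>k<K. coeff (of_int_poly (A - B) :: complex poly) k = 0" by (simp add: monom_1_dvd_iff')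
  then have "\<forall>k<K. coeff (A - B) k = 0" by simp
  then show ?thesis by (simp add: monom_1_dvd_iff')
qed

theorem lemma7p2:
  fixes d :: nat and s :: int
  assumes "d > 0" and "s \<in> {-1, 1}"
  shows "infinite {n :: nat. n > 0 \<and> special_form n \<and>
           monom 1 (2 * d) dvd (cyclotomic_poly n - (1 + smult s (monom 1 d)))}"
proof -
  have s1: "s * s = 1" using assms(2) by auto
  define sc where "sc = (of_int s :: complex)"
  have scs: "sc * sc = 1" unfolding sc_def using s1 by (metis of_int_1 of_int_mult)
  obtain m where m: "m > 0" and P: "\<forall>p. prime p \<and> 2 * d \<le> p \<and> \<not> p dvd m \<longrightarrow>
      modx (2 * d) (cp (p * m)) (1 + smult sc (monom 1 d))"
    using construct[OF assms(1) scs] by blast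
  define PS where "PS = {p. prime p \<and> m dvd p - 1 \<and> 2 * d + m < p}"
  have infPS: "infinite PS"
    unfolding infinite_nat_iff_unbounded
  proof
    fix N
    obtain q where q: "prime q" "N + 2 * d + m < q" "m dvd q - 1"
      using primes_1_mod[OF m, of "N + 2 * d + m"] by blast
    then show "\<exists>n>N. n \<in> PS" unfolding PS_def by (intro exI[of _ q]) auto
  qed
  have sub: "(\<lambda>p. p * m) ` PS \<subseteq> {n :: nat. n > 0 \<and> special_form n \<and>
           monom 1 (2 * d) dvd (cyclotomic_poly n - (1 + smult s (monom 1 d)))}"
  proof
    fix n assume "n \<in> (\<lambda>p. p * m) ` PS"
    then obtain p where p: "p \<in> PS" "n = p * m" by blast
    have pp: "prime p" "m dvd p - 1" "2 * d + m < p" using p(1) unfolding PS_def by auto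
    have n0: "n > 0" using p(2) pp(1) m prime_gt_0_nat by simp
    have sf: "special_form n" unfolding special_form_def using pp m p(2) by blast
    have nd: "\<not> p dvd m"
    proof
      assume "p dvd m"
      then have "p \<le> m" using m by (rule dvd_imp_le)
      then show False using pp(3) by simp
    qed
    have "modx (2 * d) (cp n) (1 + smult sc (monom 1 d))" using P pp nd p(2) by auto
    moreover have "cp n = of_int_poly (cyclotomic_poly n)" using cyclotomic_poly_eq[OF n0] icp[OF n0] by simp
    moreover have "(1 + smult sc (monom 1 d)) = of_int_poly (1 + smult s (monom 1 d))"
      unfolding sc_def by (simp add: of_int_poly_hom.hom_add of_int_hom.map_poly_hom_smult of_int_poly_monom)
    ultimately have "modx (2 * d) (of_int_poly (cyclotomic_poly n)) (of_int_poly (1 + smult s (monom 1 d)))" by simp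
    then have "monom 1 (2 * d) dvd (cyclotomic_poly n - (1 + smult s (monom 1 d)))" by (rule modx_to_int)
    then show "n \<in> {n :: nat. n > 0 \<and> special_form n \<and>
           monom 1 (2 * d) dvd (cyclotomic_poly n - (1 + smult s (monom 1 d)))}" using n0 sf by simp
  qed
  have "inj_on (\<lambda>p. p * m) PS" using m by (auto simp: inj_on_def)
  then have "infinite ((\<lambda>p. p * m) ` PS)" using infPS finite_imageD by blast
  then show ?thesis using sub infinite_super by blast
qed

end
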